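(* Assume $p_0\in(0,1)$, $p_j\in(0,1)$ and $\tau_j=\frac{p_0}{p_0+2(1-p_0)p_j}$ for $j=1,\dots,k$. Then for every $\Theta\in\mathbb R^{nd}$, $$\mathbb E_\xi\|G(\Theta)-G(\hat\Theta)\|^2\le 2\mathcal L\,\big(F(\Theta)-F(\hat\Theta)\big),$$ where both oracles use the same realization of $\xi$.
   Context: Clients $1,\dots,n$ are partitioned into nonempty disjoint clusters $\mathcal I_1,\dots,\mathcal I_k$; $d\ge1$. Each $f_i:\mathbb R^d\to\mathbb R$ is differentiable, $\mu$-strongly convex and $L$-smooth ($0<\mu\le L$). Fix $\gamma_i>0$ and $\alpha_j\in[0,1]$, not all $\alpha_j=0$. For $\Theta=(\theta_1,\dots,\theta_n)$ define $\bar\theta_j=\frac{\sum_{i\in\mathcal I_j}\gamma_i\theta_i}{\sum_{i\in\mathcal I_j}\gamma_i}$, $\bar\theta=\frac{\sum_{j}\sum_{i\in\mathcal I_j}\alpha_j\gamma_i\theta_i}{\sum_{j}\sum_{i\in\mathcal I_j}\alpha_j\gamma_i}$ and $F(\Theta)=\sum_{j}\sum_{i\in\mathcal I_j}\big(f_i(\theta_i)+\frac{(1-\alpha_j)\gamma_i}{2}\|\theta_i-\bar\theta_j\|^2+\frac{\alpha_j\gamma_i}{2}\|\theta_i-\bar\theta\|^2\big)$; $\hat\Theta$ is its unique minimizer. Gradient oracle: $\xi=(\xi_0,\dots,\xi_k)$ independent Bernoulli with $\mathbb P(\xi_j=1)=p_j$; $G(\Theta)=(G_1,\dots,G_n)$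 with, for $i\in\mathcal I_j$: $G_i=\frac{\gamma_i\alpha_j}{p_0}(\theta_i-\bar\theta)+\frac{\gamma_i\tau_j(1-\alpha_j)}{p_0}(\theta_i-\bar\theta_j)$ if $\xi_0=1$; $G_i=\frac{\gamma_i(1-\tau_j)(1-\alpha_j)}{(1-p_0)p_j}(\theta_i-\bar\theta_j)$ if $\xi_0=0,\xi_j=1$; $G_i=\frac{1}{(1-p_0)(1-p_j)}\nabla f_i(\theta_i)$ if $\xi_0=\xi_j=0$. Define $$\mathcal L=\max\Big\{\frac{2}{p_0}\max_{j}\max_{i\in\mathcal I_j}\alpha_j\gamma_i,\ \max_{j}\frac{2(1-\alpha_j)\max_{i\in\mathcal I_j}\gamma_i}{p_0+2(1-p_0)p_j},\ \frac{L}{1-p_0}\max_{j}\frac{1}{1-p_j}\Big\}.$$ *)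

theory Defs
  imports "HOL-Analysis.Analysis" "HOL-Probability.Probability"
begin

definition strongly_convex :: "real \<Rightarrow> ('a::real_normed_vector \<Rightarrow> real) \<Rightarrow> bool" where
  "strongly_convex \<mu> f \<longleftrightarrow> (\<forall>x y t. 0 \<le> t \<and> t \<le> 1 \<longrightarrow>
     f (t *\<^sub>R x + (1 - t) *\<^sub>R y) \<le> t * f x + (1 - t) * f y - \<mu> / 2 * t * (1 - t) * (norm (x - y))\<^sup>2)"

definition L_smooth :: "real \<Rightarrow> ('a::real_normed_vector \<Rightarrow> 'a) \<Rightarrow> bool" where
  "L_smooth L g \<longleftrightarrow> (\<forall>x y. norm (g x - g y) \<le> L * norm (x - y))"

definition clbar :: "(nat \<Rightarrow> real) \<Rightarrow> nat set \<Rightarrow> (nat \<Rightarrow> 'a::real_vector) \<Rightarrow> 'a" where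
  "clbar \<gamma> S \<Theta> = (1 / (\<Sum>i\<in>S. \<gamma> i)) *\<^sub>R (\<Sum>i\<in>S. \<gamma> i *\<^sub>R \<Theta> i)"

definition glbar :: "nat \<Rightarrow> (nat \<Rightarrow> nat set) \<Rightarrow> (nat \<Rightarrow> real) \<Rightarrow> (nat \<Rightarrow> real)
    \<Rightarrow> (nat \<Rightarrow> 'a::real_vector) \<Rightarrow> 'a" where
  "glbar k I \<alpha> \<gamma> \<Theta> = (1 / (\<Sum>j\<in>{1..k}. \<Sum>i\<in>I j. \<alpha> j * \<gamma> i)) *\<^sub>R
      (\<Sum>j\<in>{1..k}. \<Sum>i\<in>I j. (\<alpha> j * \<gamma> i) *\<^sub>R \<Theta> i)"

definition Fobj :: "nat \<Rightarrow> (nat \<Rightarrow> nat set) \<Rightarrow> (nat \<Rightarrow> real) \<Rightarrow> (nat \<Rightarrow> real)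
    \<Rightarrow> (nat \<Rightarrow> 'a::real_normed_vector \<Rightarrow> real) \<Rightarrow> (nat \<Rightarrow> 'a) \<Rightarrow> real" where
  "Fobj k I \<alpha> \<gamma> f \<Theta> = (\<Sum>j\<in>{1..k}. \<Sum>i\<in>I j.
      f i (\<Theta> i) + (1 - \<alpha> j) * \<gamma> i / 2 * (norm (\<Theta> i - clbar \<gamma> (I j) \<Theta>))\<^sup>2
      + \<alpha> j * \<gamma> i / 2 * (norm (\<Theta> i - glbar k I \<alpha> \<gamma> \<Theta>))\<^sup>2)"

(* component G_i of the stochastic oracle, for client i in cluster j, given the
   realization \<xi> = (\<xi>_0,...,\<xi>_k);  p 0 = p_0, p j = p_j, g i = gradient of f_i *)
definition Gorc :: "nat \<Rightarrow> (nat \<Rightarrow> nat set) \<Rightarrow> (nat \<Rightarrow> real) \<Rightarrow> (nat \<Rightarrow> real)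
    \<Rightarrow> (nat \<Rightarrow> real) \<Rightarrow> (nat \<Rightarrow> real) \<Rightarrow> (nat \<Rightarrow> 'a::real_normed_vector \<Rightarrow> 'a)
    \<Rightarrow> (nat \<Rightarrow> bool) \<Rightarrow> (nat \<Rightarrow> 'a) \<Rightarrow> nat \<Rightarrow> nat \<Rightarrow> 'a" where
  "Gorc k I \<alpha> \<gamma> \<tau> p g \<xi> \<Theta> j i =
     (if \<xi> 0 then
        (\<gamma> i * \<alpha> j / p 0) *\<^sub>R (\<Theta> i - glbar k I \<alpha> \<gamma> \<Theta>)
        + (\<gamma> i * \<tau> j * (1 - \<alpha> j) / p 0) *\<^sub>R (\<Theta> i - clbar \<gamma> (I j) \<Theta>)
      else if \<xi> j then
        (\<gamma> i * (1 - \<tau> j) * (1 - \<alpha> j) / ((1 - p 0) * p j)) *\<^sub>R (\<Theta> i - clbar \<gamma> (I j) \<Theta>)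
      else (1 / ((1 - p 0) * (1 - p j))) *\<^sub>R g i (\<Theta> i))"

definition calL :: "nat \<Rightarrow> (nat \<Rightarrow> nat set) \<Rightarrow> (nat \<Rightarrow> real) \<Rightarrow> (nat \<Rightarrow> real)
    \<Rightarrow> (nat \<Rightarrow> real) \<Rightarrow> real \<Rightarrow> real" where
  "calL k I \<alpha> \<gamma> p L = max (max
      (2 / p 0 * Max ((\<lambda>j. Max ((\<lambda>i. \<alpha> j * \<gamma> i) ` I j)) ` {1..k}))
      (Max ((\<lambda>j. 2 * (1 - \<alpha> j) * Max (\<gamma> ` I j) / (p 0 + 2 * (1 - p 0) * p j)) ` {1..k})))
      (L / (1 - p 0) * Max ((\<lambda>j. 1 / (1 - p j)) ` {1..k}))"

definition xi_pmf :: "nat \<Rightarrow> (nat \<Rightarrow> real) \<Rightarrow> (nat \<Rightarrow> bool) pmf" where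
  "xi_pmf k p = Pi_pmf {0..k} False (\<lambda>j. bernoulli_pmf (p j))"

end

theory Submission
  imports Defs
begin

lemma xi_finite: "finite (set_pmf (xi_pmf k p))"
proof -
  have "set_pmf (xi_pmf k p) \<subseteq> {f. \<forall>x. x \<notin> {0..k} \<longrightarrow> f x = False}"
    unfolding xi_pmf_def by (rule set_Pi_pmf_subset) simp
  also have "\<dots> \<subseteq> (\<lambda>S x. x \<in> S) ` Pow {0..k}"
  proof
    fix f :: "nat \<Rightarrow> bool" assume "f \<in> {f. \<forall>x. x \<notin> {0..k} \<longrightarrow> f x = False}"
    then have "f = (\<lambda>x. x \<in> {x\<in>{0..k}. f x})" by auto
    then show "f \<in> (\<lambda>S x. x \<in> S) ` Pow {0..k}" by blast
  qed
  finally show ?thesis by (rule finite_subset) simp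
qed

lemma xi_marg:
  assumes "j \<in> {1..k}"
  shows "map_pmf (\<lambda>\<xi>. (\<xi> 0, \<xi> j)) (xi_pmf k p) = pair_pmf (bernoulli_pmf (p 0)) (bernoulli_pmf (p j))"
proof -
  have e: "{0..k} = insert 0 {1..k}" by auto
  have "xi_pmf k p = map_pmf (\<lambda>(y,f). f(0:=y)) (pair_pmf (bernoulli_pmf (p 0)) (Pi_pmf {1..k} False (\<lambda>j. bernoulli_pmf (p j))))"
    unfolding xi_pmf_def e by (subst Pi_pmf_insert) auto
  then have "map_pmf (\<lambda>\<xi>. (\<xi> 0, \<xi> j)) (xi_pmf k p) = map_pmf (\<lambda>(a, b). (id a, (\<lambda>f. f j) b)) (pair_pmf (bernoulli_pmf (p 0)) (Pi_pmf {1..k} False (\<lambda>j. bernoulli_pmf (p j))))"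
    using assms by (simp add: pmf.map_comp o_def case_prod_unfold)
  also have "\<dots> = pair_pmf (map_pmf id (bernoulli_pmf (p 0))) (map_pmf (\<lambda>f. f j) (Pi_pmf {1..k} False (\<lambda>j. bernoulli_pmf (p j))))"
    by (rule map_pair)
  also have "\<dots> = pair_pmf (bernoulli_pmf (p 0)) (bernoulli_pmf (p j))"
    using assms by (simp add: Pi_pmf_component)
  finally show ?thesis .
qed

lemma xi_exp:
  assumes "j \<in> {1..k}" "0 \<le> p 0" "p 0 \<le> 1" "0 \<le> p j" "p j \<le> 1"
  shows "measure_pmf.expectation (xi_pmf k p) (\<lambda>\<xi>. h (\<xi> 0) (\<xi> j) :: real) =
     p 0 * (p j * h True True + (1 - p j) * h True False) + (1 - p 0) * (p j * h False True + (1 - p j) * h False False)"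
proof -
  have "measure_pmf.expectation (xi_pmf k p) (\<lambda>\<xi>. h (\<xi> 0) (\<xi> j)) =
     measure_pmf.expectation (map_pmf (\<lambda>\<xi>. (\<xi> 0, \<xi> j)) (xi_pmf k p)) (case_prod h)"
    by simp
  also have "\<dots> = measure_pmf.expectation (pair_pmf (bernoulli_pmf (p 0)) (bernoulli_pmf (p j))) (case_prod h)"
    using assms by (simp add: xi_marg)
  also have "\<dots> = (\<Sum>a\<in>UNIV. pmf (pair_pmf (bernoulli_pmf (p 0)) (bernoulli_pmf (p j))) a *\<^sub>R case_prod h a)"
    by (rule integral_measure_pmf) auto
  also have "\<dots> = p 0 * (p j * h True True + (1 - p j) * h True False) + (1 - p 0) * (p j * h False True + (1 - p j) * h False False)"
  proof -
    have u: "(UNIV::(bool\<times>bool) set) = {(True,True),(True,False),(False,True),(False,False)}" by auto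
    show ?thesis using assms unfolding u by (simp add: pmf_pair algebra_simps)
  qed
  finally show ?thesis .
qed


lemma line_deriv:
  fixes f :: "'a::euclidean_space \<Rightarrow> real"
  assumes "\<And>x. (f has_derivative (\<lambda>h. g x \<bullet> h)) (at x)"
  shows "((\<lambda>t. f (x + t *\<^sub>R d)) has_real_derivative (g (x + t *\<^sub>R d) \<bullet> d)) (at t within S)"
proof -
  have l: "((\<lambda>t. x + t *\<^sub>R d) has_derivative (\<lambda>s. s *\<^sub>R d)) (at t within S)"
    by (auto intro!: derivative_eq_intros)
  have "((\<lambda>t. f (x + t *\<^sub>R d)) has_derivative (\<lambda>s. g (x + t *\<^sub>R d) \<bullet> (s *\<^sub>R d))) (at t within S)"
    using has_derivative_compose[OF l has_derivative_at_withinI[OF assms]] by (simp add: o_def)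
  moreover have "(\<lambda>s. g (x + t *\<^sub>R d) \<bullet> (s *\<^sub>R d)) = (*) (g (x + t *\<^sub>R d) \<bullet> d)"
    by (auto simp: fun_eq_iff)
  ultimately show ?thesis by (simp add: has_field_derivative_def)
qed

lemma descent:
  fixes f :: "'a::euclidean_space \<Rightarrow> real"
  assumes d: "\<And>x. (f has_derivative (\<lambda>h. g x \<bullet> h)) (at x)"
    and sm: "L_smooth L g"
  shows "f y \<le> f x + g x \<bullet> (y - x) + L / 2 * (norm (y - x))\<^sup>2"
proof -
  define d where "d = y - x"
  define h where "h t = f (x + t *\<^sub>R d) - t * (g x \<bullet> d) - L / 2 * t\<^sup>2 * (norm d)\<^sup>2" for t
  have "h 1 \<le> h 0"
  proof (rule DERIV_nonpos_imp_nonincreasing[of 0 1 h])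
    fix t :: real assume t: "0 \<le> t" "t \<le> 1"
    have D: "(h has_real_derivative (g (x + t *\<^sub>R d) \<bullet> d - g x \<bullet> d - L / 2 * (2 * t) * (norm d)\<^sup>2)) (at t)"
      unfolding h_def
      by (auto intro!: derivative_eq_intros line_deriv[OF d, where S=UNIV, simplified])
    have "g (x + t *\<^sub>R d) \<bullet> d - g x \<bullet> d = (g (x + t *\<^sub>R d) - g x) \<bullet> d" by (simp add: inner_diff_left)
    also have "\<dots> \<le> norm (g (x + t *\<^sub>R d) - g x) * norm d" by (rule norm_cauchy_schwarz)
    also have "\<dots> \<le> (L * norm (t *\<^sub>R d)) * norm d"
    proof (rule mult_right_mono)
      show "norm (g (x + t *\<^sub>R d) - g x) \<le> L * norm (t *\<^sub>R d)"
        using sm unfolding L_smooth_def by (metis add_diff_cancel_left')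
    qed simp
    also have "\<dots> = L / 2 * (2 * t) * (norm d)\<^sup>2" using t by (simp add: power2_eq_square)
    finally have "g (x + t *\<^sub>R d) \<bullet> d - g x \<bullet> d - L / 2 * (2 * t) * (norm d)\<^sup>2 \<le> 0" by simp
    then show "\<exists>y. (h has_real_derivative y) (at t) \<and> y \<le> 0" using D by blast
  qed simp
  then show ?thesis unfolding h_def d_def by simp
qed

lemma tangent:
  fixes f :: "'a::euclidean_space \<Rightarrow> real"
  assumes d: "\<And>x. (f has_derivative (\<lambda>h. g x \<bullet> h)) (at x)"
    and sc: "strongly_convex \<mu> f" and mu: "0 \<le> \<mu>"
  shows "f x + g x \<bullet> (y - x) \<le> f y"
proof -
  define q where "q t = f (x + t *\<^sub>R (y - x))" for t
  have sc': "\<And>a b s. 0 \<le> s \<Longrightarrow> s \<le> 1 \<Longrightarrow> f (s *\<^sub>R a + (1 - s) *\<^sub>R b) \<le> s * f a + (1 - s) * f b - \<mu> / 2 * s * (1 - s) * (norm (a - b))\<^sup>2"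
    using sc unfolding strongly_convex_def by blast
  have cv: "convex_on UNIV q"
  proof (rule convex_onI)
    fix t s1 s2 :: real assume t: "0 < t" "t < 1"
    have e: "x + ((1 - t) * s1 + t * s2) *\<^sub>R (y - x) = (1 - t) *\<^sub>R (x + s1 *\<^sub>R (y - x)) + (1 - (1 - t)) *\<^sub>R (x + s2 *\<^sub>R (y - x))"
      by (simp add: algebra_simps)
    have nn: "0 \<le> \<mu> / 2 * (1 - t) * (1 - (1 - t)) * (norm ((x + s1 *\<^sub>R (y - x)) - (x + s2 *\<^sub>R (y - x))))\<^sup>2"
      using t mu by (intro mult_nonneg_nonneg) auto
    have "f ((1 - t) *\<^sub>R (x + s1 *\<^sub>R (y - x)) + (1 - (1 - t)) *\<^sub>R (x + s2 *\<^sub>R (y - x)))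
       \<le> (1 - t) * f (x + s1 *\<^sub>R (y - x)) + (1 - (1 - t)) * f (x + s2 *\<^sub>R (y - x)) - \<mu> / 2 * (1 - t) * (1 - (1 - t)) * (norm ((x + s1 *\<^sub>R (y - x)) - (x + s2 *\<^sub>R (y - x))))\<^sup>2"
      using t by (intro sc') auto
    then show "q ((1 - t) *\<^sub>R s1 + t *\<^sub>R s2) \<le> (1 - t) * q s1 + t * q s2" unfolding q_def real_scaleR_def e using nn by simp
  qed simp
  have D: "(q has_real_derivative (g x \<bullet> (y - x))) (at 0 within UNIV)"
    unfolding q_def using line_deriv[OF d, of x "y - x" 0] by simp
  have "q 1 - q 0 \<ge> (g x \<bullet> (y - x)) * (1 - 0)"
    by (rule convex_on_imp_above_tangent[OF cv _ _ _ D]) auto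
  then show ?thesis unfolding q_def by simp
qed

lemma cocoercive:
  fixes f :: "'a::euclidean_space \<Rightarrow> real"
  assumes d: "\<And>x. (f has_derivative (\<lambda>h. g x \<bullet> h)) (at x)"
    and sc: "strongly_convex \<mu> f" and mu: "0 \<le> \<mu>" and sm: "L_smooth L g" and L: "0 < L"
  shows "f x + g x \<bullet> (y - x) + 1 / (2 * L) * (norm (g y - g x))\<^sup>2 \<le> f y"
proof -
  define w where "w = g y - g x"
  define z where "z = y - (1 / L) *\<^sub>R w"
  have A: "f x + g x \<bullet> (z - x) \<le> f z" by (rule tangent[OF d sc mu])
  have B: "f z \<le> f y + g y \<bullet> (z - y) + L / 2 * (norm (z - y))\<^sup>2" by (rule descent[OF d sm])
  have zx: "g x \<bullet> (z - x) = g x \<bullet> (y - x) - (1 / L) * (g x \<bullet> w)"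
    unfolding z_def by (simp add: inner_diff_right algebra_simps)
  have zy: "g y \<bullet> (z - y) = - (1 / L) * (g y \<bullet> w)"
    unfolding z_def by (simp add: inner_diff_right algebra_simps)
  have nzy: "norm (z - y) = norm w / L" unfolding z_def using L by simp
  have nz: "L / 2 * (norm (z - y))\<^sup>2 = 1 / (2 * L) * (w \<bullet> w)"
    unfolding nzy power2_norm_eq_inner[symmetric] using L by (simp add: field_simps power2_eq_square)
  have ww: "g y \<bullet> w - g x \<bullet> w = w \<bullet> w" unfolding w_def by (simp add: inner_diff_left)
  have "f x + g x \<bullet> (y - x) + 1 / L * (g y \<bullet> w - g x \<bullet> w) - 1 / (2 * L) * (w \<bullet> w) \<le> f y"
    using A B zx zy nz by (simp add: algebra_simps)
  moreover have "1 / L * (g y \<bullet> w - g x \<bullet> w) - 1 / (2 * L) * (w \<bullet> w) = 1 / (2 * L) * (w \<bullet> w)"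
    using ww L by (simp add: field_simps)
  ultimately have "f x + g x \<bullet> (y - x) + 1 / (2 * L) * (w \<bullet> w) \<le> f y" by linarith
  then show ?thesis unfolding w_def[symmetric] by (simp add: power2_norm_eq_inner)
qed


lemma clbar_lin: "clbar \<gamma> S (\<lambda>i. a i + t *\<^sub>R b i) = clbar \<gamma> S a + t *\<^sub>R clbar \<gamma> S b"
proof -
  have "(\<Sum>i\<in>S. \<gamma> i *\<^sub>R (a i + t *\<^sub>R b i)) = (\<Sum>i\<in>S. \<gamma> i *\<^sub>R a i) + t *\<^sub>R (\<Sum>i\<in>S. \<gamma> i *\<^sub>R b i)"
    by (simp add: scaleR_add_right sum.distrib scaleR_sum_right mult.commute)
  then show ?thesis unfolding clbar_def by (simp add: scaleR_add_right mult.commute)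
qed

lemma clbar_diff: "clbar \<gamma> S (\<lambda>i. a i - b i) = clbar \<gamma> S a - clbar \<gamma> S b"
  unfolding clbar_def by (simp add: sum_subtractf scaleR_diff_right)

lemma glbar_lin: "glbar k I \<alpha> \<gamma> (\<lambda>i. a i + t *\<^sub>R b i) = glbar k I \<alpha> \<gamma> a + t *\<^sub>R glbar k I \<alpha> \<gamma> b"
proof -
  have "(\<Sum>j\<in>{1..k}. \<Sum>i\<in>I j. (\<alpha> j * \<gamma> i) *\<^sub>R (a i + t *\<^sub>R b i)) = (\<Sum>j\<in>{1..k}. \<Sum>i\<in>I j. (\<alpha> j * \<gamma> i) *\<^sub>R a i) + t *\<^sub>R (\<Sum>j\<in>{1..k}. \<Sum>i\<in>I j. (\<alpha> j * \<gamma> i) *\<^sub>R b i)"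
    by (simp add: scaleR_add_right sum.distrib scaleR_sum_right mult.commute mult.left_commute)
  then show ?thesis unfolding glbar_def by (simp add: scaleR_add_right mult.commute)
qed

lemma glbar_diff: "glbar k I \<alpha> \<gamma> (\<lambda>i. a i - b i) = glbar k I \<alpha> \<gamma> a - glbar k I \<alpha> \<gamma> b"
  unfolding glbar_def by (simp add: sum_subtractf scaleR_diff_right)

lemma sq_expand: "(norm (u + t *\<^sub>R v))\<^sup>2 = (norm u)\<^sup>2 + 2 * t * (u \<bullet> v) + t\<^sup>2 * (norm v)\<^sup>2"
  for u v :: "'a::real_inner"
  unfolding power2_norm_eq_inner by (simp add: inner_add_left inner_add_right inner_commute algebra_simps power2_eq_square)

lemma quad_zero:
  fixes S C :: real
  assumes "\<And>t. 0 \<le> t * S + t\<^sup>2 * C"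
  shows "S = 0"
proof -
  define M where "M = \<bar>C\<bar> + 1"
  have M: "0 < M" unfolding M_def by simp
  define t where "t = - S / M"
  have "t\<^sup>2 * C \<le> t\<^sup>2 * \<bar>C\<bar>" by (intro mult_left_mono) auto
  also have "\<dots> = S\<^sup>2 * \<bar>C\<bar> / M\<^sup>2" unfolding t_def by (simp add: power_divide)
  finally have "0 \<le> - S\<^sup>2 / M + S\<^sup>2 * \<bar>C\<bar> / M\<^sup>2"
    using assms[of t] unfolding t_def by (simp add: power2_eq_square)
  also have "- S\<^sup>2 / M + S\<^sup>2 * \<bar>C\<bar> / M\<^sup>2 = S\<^sup>2 * (\<bar>C\<bar> - M) / M\<^sup>2"
    using M by (simp add: field_simps power2_eq_square)
  also have "\<dots> = - S\<^sup>2 / M\<^sup>2" unfolding M_def by simp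
  finally have h: "S\<^sup>2 / M\<^sup>2 \<le> 0" by simp
  have "S\<^sup>2 = S\<^sup>2 / M\<^sup>2 * M\<^sup>2" using M by simp
  also have "\<dots> \<le> 0" using h by (intro mult_nonpos_nonneg) auto
  finally show ?thesis by simp
qed

lemma norm2_comb: "(norm (a *\<^sub>R x + b *\<^sub>R y))\<^sup>2 \<le> 2 * a\<^sup>2 * (norm x)\<^sup>2 + 2 * b\<^sup>2 * (norm y)\<^sup>2"
  for x y :: "'a::real_normed_vector"
proof -
  have "norm (a *\<^sub>R x + b *\<^sub>R y) \<le> \<bar>a\<bar> * norm x + \<bar>b\<bar> * norm y"
    by (metis norm_scaleR norm_triangle_ineq)
  then have "(norm (a *\<^sub>R x + b *\<^sub>R y))\<^sup>2 \<le> (\<bar>a\<bar> * norm x + \<bar>b\<bar> * norm y)\<^sup>2"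
    by (intro power_mono) auto
  also have "\<dots> \<le> 2 * a\<^sup>2 * (norm x)\<^sup>2 + 2 * b\<^sup>2 * (norm y)\<^sup>2"
  proof -
    have sq: "(P + Q)\<^sup>2 \<le> 2 * P\<^sup>2 + 2 * Q\<^sup>2" for P Q :: real
    proof -
      have "0 \<le> (P - Q)\<^sup>2" by simp
      then show ?thesis by (simp add: power2_eq_square algebra_simps)
    qed
    show ?thesis using sq[of "\<bar>a\<bar> * norm x" "\<bar>b\<bar> * norm y"] by (simp add: power_mult_distrib)
  qed
  finally show ?thesis .
qed

lemma scalar_bound:
  fixes p0 pj \<alpha> \<gamma> L \<tau> X Y Z A B C E cL :: real
  assumes p0: "0 < p0" "p0 < 1" and pj: "0 < pj" "pj < 1" and al: "0 \<le> \<alpha>" "\<alpha> \<le> 1"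
    and ga: "0 < \<gamma>" and L: "0 < L" and tau: "\<tau> = p0 / (p0 + 2 * (1 - p0) * pj)"
    and X: "0 \<le> X" and Y: "0 \<le> Y" and Z: "0 \<le> Z"
    and c1: "2 / p0 * (\<alpha> * \<gamma>) \<le> cL"
    and c2: "2 * (1 - \<alpha>) * \<gamma> / (p0 + 2 * (1 - p0) * pj) \<le> cL"
    and c3: "L / (1 - p0) * (1 / (1 - pj)) \<le> cL"
    and A: "A \<le> 2 * (\<gamma> * \<alpha> / p0)\<^sup>2 * X + 2 * (\<gamma> * \<tau> * (1 - \<alpha>) / p0)\<^sup>2 * Y"
    and B: "B = (\<gamma> * (1 - \<tau>) * (1 - \<alpha>) / ((1 - p0) * pj))\<^sup>2 * Y"
    and C: "C = (1 / ((1 - p0) * (1 - pj)))\<^sup>2 * Z"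
    and E: "Z / (2 * L) + (1 - \<alpha>) * \<gamma> / 2 * Y + \<alpha> * \<gamma> / 2 * X \<le> E"
  shows "p0 * A + (1 - p0) * (pj * B + (1 - pj) * C) \<le> 2 * cL * E"
proof -
  define D where "D = p0 + 2 * (1 - p0) * pj"
  have D: "0 < D" unfolding D_def using p0 pj by (simp add: add_pos_nonneg)
  have cL: "0 \<le> cL" using c3 L p0 pj by (smt (verit) divide_pos_pos mult_pos_pos)
  have a: "p0 * (2 * (\<gamma> * \<alpha> / p0)\<^sup>2 * X) \<le> cL * (\<alpha> * \<gamma> * X)"
  proof -
    have "p0 * (2 * (\<gamma> * \<alpha> / p0)\<^sup>2 * X) = (2 / p0 * (\<alpha> * \<gamma>)) * (\<alpha> * \<gamma> * X)"
      using p0 by (simp add: power2_eq_square field_simps)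
    also have "\<dots> \<le> cL * (\<alpha> * \<gamma> * X)" using c1 al ga X by (intro mult_right_mono) auto
    finally show ?thesis .
  qed
  have b: "p0 * (2 * (\<gamma> * \<tau> * (1 - \<alpha>) / p0)\<^sup>2 * Y) + (1 - p0) * (pj * B) \<le> cL * ((1 - \<alpha>) * \<gamma> * Y)"
  proof -
    define q where "q = (1 - p0) * pj"
    have q: "0 < q" unfolding q_def using p0 pj by simp
    have Dq: "D = p0 + 2 * q" unfolding D_def q_def by simp
    define K where "K = \<gamma>\<^sup>2 * (1 - \<alpha>)\<^sup>2 * Y"
    have tD: "\<tau> = p0 / D" unfolding tau D_def ..
    have t1: "1 - \<tau> = 2 * q / D" using D unfolding tD Dq by (simp add: field_simps)
    have e1: "p0 * (2 * (\<gamma> * \<tau> * (1 - \<alpha>) / p0)\<^sup>2 * Y) = 2 * K * p0 / D\<^sup>2"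
      unfolding tD K_def using p0 D by (simp add: power2_eq_square field_simps)
    have e2: "(1 - p0) * (pj * B) = 4 * K * q / D\<^sup>2"
      unfolding B t1 K_def q_def[symmetric] mult.assoc[symmetric] using q D
      by (simp add: power2_eq_square field_simps)
    have "2 * K * p0 / D\<^sup>2 + 4 * K * q / D\<^sup>2 = 2 * K * (p0 + 2 * q) / D\<^sup>2"
      by (simp add: add_divide_distrib algebra_simps)
    also have "\<dots> = 2 * K / D" unfolding Dq[symmetric] using D by (simp add: power2_eq_square)
    finally have e3: "2 * K * p0 / D\<^sup>2 + 4 * K * q / D\<^sup>2 = 2 * K / D" .
    have "p0 * (2 * (\<gamma> * \<tau> * (1 - \<alpha>) / p0)\<^sup>2 * Y) + (1 - p0) * (pj * B)
        = (2 * (1 - \<alpha>) * \<gamma> / D) * ((1 - \<alpha>) * \<gamma> * Y)"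
      unfolding e1 e2 e3 using D by (simp add: K_def power2_eq_square field_simps)
    also have "\<dots> \<le> cL * ((1 - \<alpha>) * \<gamma> * Y)" using c2 al ga Y unfolding D_def by (intro mult_right_mono) auto
    finally show ?thesis .
  qed
  have c: "(1 - p0) * ((1 - pj) * C) \<le> cL * (Z / L)"
  proof -
    define r where "r = (1 - p0) * (1 - pj)"
    have r: "0 < r" unfolding r_def using p0 pj by simp
    have "(1 - p0) * ((1 - pj) * C) = r * ((1 / r)\<^sup>2 * Z)" unfolding C r_def by simp
    also have "\<dots> = Z / r" using r by (simp add: power2_eq_square)
    also have "\<dots> = (L / r) * (Z / L)" using L by simp
    also have "L / r = L / (1 - p0) * (1 / (1 - pj))" unfolding r_def by simp
    finally have "(1 - p0) * ((1 - pj) * C) = (L / (1 - p0) * (1 / (1 - pj))) * (Z / L)" .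
    also have "\<dots> \<le> cL * (Z / L)" using c3 Z L by (intro mult_right_mono) auto
    finally show ?thesis .
  qed
  have "p0 * A \<le> p0 * (2 * (\<gamma> * \<alpha> / p0)\<^sup>2 * X + 2 * (\<gamma> * \<tau> * (1 - \<alpha>) / p0)\<^sup>2 * Y)"
    using A p0 by (intro mult_left_mono) auto
  then have "p0 * A + (1 - p0) * (pj * B + (1 - pj) * C) \<le> cL * (\<alpha> * \<gamma> * X) + cL * ((1 - \<alpha>) * \<gamma> * Y) + cL * (Z / L)"
    using a b c by (simp add: algebra_simps)
  also have "\<dots> = 2 * cL * (Z / (2 * L) + (1 - \<alpha>) * \<gamma> / 2 * Y + \<alpha> * \<gamma> / 2 * X)"
    using L by (simp add: field_simps)
  also have "\<dots> \<le> 2 * cL * E" using E cL by (intro mult_left_mono) auto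
  finally show ?thesis .
qed

theorem mainTheorem6:
  fixes n k :: nat
    and I :: "nat \<Rightarrow> nat set"
    and f :: "nat \<Rightarrow> 'a::euclidean_space \<Rightarrow> real"
    and g :: "nat \<Rightarrow> 'a \<Rightarrow> 'a"
    and \<mu> L :: real
    and \<gamma> \<alpha> p \<tau> :: "nat \<Rightarrow> real"
    and \<Theta>hat \<Theta> :: "nat \<Rightarrow> 'a"
  assumes clusters_nonempty: "\<forall>j\<in>{1..k}. I j \<noteq> {}"
    and clusters_sub: "\<forall>j\<in>{1..k}. I j \<subseteq> {1..n}"
    and clusters_disj: "\<forall>j\<in>{1..k}. \<forall>j'\<in>{1..k}. j \<noteq> j' \<longrightarrow> I j \<inter> I j' = {}"
    and clusters_cover: "(\<Union>j\<in>{1..k}. I j) = {1..n}"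
    and mu_pos: "0 < \<mu>" and mu_le_L: "\<mu> \<le> L"
    and grad: "\<forall>i\<in>{1..n}. \<forall>x. (f i has_derivative (\<lambda>h. g i x \<bullet> h)) (at x)"
    and sconv: "\<forall>i\<in>{1..n}. strongly_convex \<mu> (f i)"
    and smooth: "\<forall>i\<in>{1..n}. L_smooth L (g i)"
    and gamma_pos: "\<forall>i\<in>{1..n}. 0 < \<gamma> i"
    and alpha_range: "\<forall>j\<in>{1..k}. 0 \<le> \<alpha> j \<and> \<alpha> j \<le> 1"
    and alpha_nz: "\<exists>j\<in>{1..k}. \<alpha> j \<noteq> 0"
    and minimizer: "\<forall>\<Theta>'. Fobj k I \<alpha> \<gamma> f \<Theta>hat \<le> Fobj k I \<alpha> \<gamma> f \<Theta>'"
    and p0: "0 < p 0 \<and> p 0 < 1"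
    and pj: "\<forall>j\<in>{1..k}. 0 < p j \<and> p j < 1"
    and tau: "\<forall>j\<in>{1..k}. \<tau> j = p 0 / (p 0 + 2 * (1 - p 0) * p j)"
  shows "measure_pmf.expectation (xi_pmf k p)
           (\<lambda>\<xi>. \<Sum>j\<in>{1..k}. \<Sum>i\<in>I j.
              (norm (Gorc k I \<alpha> \<gamma> \<tau> p g \<xi> \<Theta> j i - Gorc k I \<alpha> \<gamma> \<tau> p g \<xi> \<Theta>hat j i))\<^sup>2)
         \<le> 2 * calL k I \<alpha> \<gamma> p L * (Fobj k I \<alpha> \<gamma> f \<Theta> - Fobj k I \<alpha> \<gamma> f \<Theta>hat)"
proof -
  have Lp: "0 < L" using mu_pos mu_le_L by linarith
  have fin: "finite (I j)" if "j \<in> {1..k}" for j using clusters_sub that finite_subset by blast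
  have iin: "i \<in> {1..n}" if "j \<in> {1..k}" "i \<in> I j" for j i using clusters_sub that by blast
  define \<Delta> where "\<Delta> = (\<lambda>i. \<Theta> i - \<Theta>hat i)"
  define \<Phi> where "\<Phi> t = (\<lambda>i. \<Theta>hat i + t *\<^sub>R \<Delta> i)" for t :: real
  have \<Phi>1: "\<Phi> 1 = \<Theta>" unfolding \<Phi>_def \<Delta>_def by auto
  have \<Phi>0: "\<Phi> 0 = \<Theta>hat" unfolding \<Phi>_def by auto
  define u where "u j i = \<Theta>hat i - clbar \<gamma> (I j) \<Theta>hat" for j i
  define v where "v j i = \<Delta> i - clbar \<gamma> (I j) \<Delta>" for j i
  define u' where "u' i = \<Theta>hat i - glbar k I \<alpha> \<gamma> \<Theta>hat" for i
  define v' where "v' i = \<Delta> i - glbar k I \<alpha> \<gamma> \<Delta>" for i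
  have \<Phi>c: "\<Phi> t i - clbar \<gamma> (I j) (\<Phi> t) = u j i + t *\<^sub>R v j i" for t j i
    unfolding \<Phi>_def u_def v_def clbar_lin by (simp add: algebra_simps)
  have \<Phi>g: "\<Phi> t i - glbar k I \<alpha> \<gamma> (\<Phi> t) = u' i + t *\<^sub>R v' i" for t i
    unfolding \<Phi>_def u'_def v'_def glbar_lin by (simp add: algebra_simps)
  define T where "T \<Theta>' j i = f i (\<Theta>' i) + (1 - \<alpha> j) * \<gamma> i / 2 * (norm (\<Theta>' i - clbar \<gamma> (I j) \<Theta>'))\<^sup>2
      + \<alpha> j * \<gamma> i / 2 * (norm (\<Theta>' i - glbar k I \<alpha> \<gamma> \<Theta>'))\<^sup>2" for \<Theta>' j i
  have F_T: "Fobj k I \<alpha> \<gamma> f \<Theta>' = (\<Sum>j\<in>{1..k}. \<Sum>i\<in>I j. T \<Theta>' j i)" for \<Theta>'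
    unfolding Fobj_def T_def ..
  define w1 where "w1 j i = (1 - \<alpha> j) * \<gamma> i / 2" for j i
  define w2 where "w2 j i = \<alpha> j * \<gamma> i / 2" for j i
  have Texp: "T (\<Phi> t) j i = f i (\<Theta>hat i + t *\<^sub>R \<Delta> i)
      + w1 j i * ((norm (u j i))\<^sup>2 + 2 * t * (u j i \<bullet> v j i) + t\<^sup>2 * (norm (v j i))\<^sup>2)
      + w2 j i * ((norm (u' i))\<^sup>2 + 2 * t * (u' i \<bullet> v' i) + t\<^sup>2 * (norm (v' i))\<^sup>2)" for t j i
    unfolding T_def \<Phi>c \<Phi>g sq_expand w1_def w2_def by (simp add: \<Phi>_def)
  define s where "s j i = g i (\<Theta>hat i) \<bullet> \<Delta> i + 2 * w1 j i * (u j i \<bullet> v j i) + 2 * w2 j i * (u' i \<bullet> v' i)" for j i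
  define c where "c j i = L / 2 * (norm (\<Delta> i))\<^sup>2 + w1 j i * (norm (v j i))\<^sup>2 + w2 j i * (norm (v' i))\<^sup>2" for j i
  define e where "e j i = f i (\<Theta> i) - f i (\<Theta>hat i) - g i (\<Theta>hat i) \<bullet> \<Delta> i
      + w1 j i * (norm (v j i))\<^sup>2 + w2 j i * (norm (v' i))\<^sup>2" for j i
  define S where "S = (\<Sum>j\<in>{1..k}. \<Sum>i\<in>I j. s j i)"
  define C where "C = (\<Sum>j\<in>{1..k}. \<Sum>i\<in>I j. c j i)"
  have step1: "T (\<Phi> t) j i \<le> T \<Theta>hat j i + t * s j i + t\<^sup>2 * c j i"
    if "j \<in> {1..k}" "i \<in> I j" for t j i
  proof -
    have d: "\<And>x. (f i has_derivative (\<lambda>h. g i x \<bullet> h)) (at x)" using grad iin[OF that] by blast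
    have sm: "L_smooth L (g i)" using smooth iin[OF that] by blast
    have "f i (\<Theta>hat i + t *\<^sub>R \<Delta> i) \<le> f i (\<Theta>hat i) + g i (\<Theta>hat i) \<bullet> (\<Theta>hat i + t *\<^sub>R \<Delta> i - \<Theta>hat i)
        + L / 2 * (norm (\<Theta>hat i + t *\<^sub>R \<Delta> i - \<Theta>hat i))\<^sup>2"
      by (rule descent[OF d sm])
    then have "f i (\<Theta>hat i + t *\<^sub>R \<Delta> i) \<le> f i (\<Theta>hat i) + t * (g i (\<Theta>hat i) \<bullet> \<Delta> i) + t\<^sup>2 * (L / 2 * (norm (\<Delta> i))\<^sup>2)"
      by (simp add: power_mult_distrib algebra_simps)
    then show ?thesis unfolding Texp \<Phi>0[symmetric] Texp[of 0] s_def c_def by (simp add: algebra_simps)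
  qed
  have step1sum: "Fobj k I \<alpha> \<gamma> f (\<Phi> t) \<le> Fobj k I \<alpha> \<gamma> f \<Theta>hat + t * S + t\<^sup>2 * C" for t
  proof -
    have "Fobj k I \<alpha> \<gamma> f (\<Phi> t) \<le> (\<Sum>j\<in>{1..k}. \<Sum>i\<in>I j. T \<Theta>hat j i + t * s j i + t\<^sup>2 * c j i)"
      unfolding F_T by (intro sum_mono step1) auto
    also have "\<dots> = Fobj k I \<alpha> \<gamma> f \<Theta>hat + t * S + t\<^sup>2 * C"
      unfolding F_T S_def C_def by (simp add: sum.distrib sum_distrib_left)
    finally show ?thesis .
  qed
  have S0: "S = 0"
  proof (rule quad_zero)
    fix t
    show "0 \<le> t * S + t\<^sup>2 * C" using step1sum[of t] minimizer by (metis add.assoc le_add_same_cancel1 order_trans)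
  qed
  have step3: "T \<Theta> j i - T \<Theta>hat j i = e j i + s j i" for j i
    unfolding \<Phi>1[symmetric] \<Phi>0[symmetric] Texp e_def s_def by (simp add: \<Phi>_def \<Delta>_def algebra_simps)
  have Fdiff: "Fobj k I \<alpha> \<gamma> f \<Theta> - Fobj k I \<alpha> \<gamma> f \<Theta>hat = (\<Sum>j\<in>{1..k}. \<Sum>i\<in>I j. e j i)"
  proof -
    have "Fobj k I \<alpha> \<gamma> f \<Theta> - Fobj k I \<alpha> \<gamma> f \<Theta>hat = (\<Sum>j\<in>{1..k}. \<Sum>i\<in>I j. e j i + s j i)"
      unfolding F_T step3[symmetric] by (simp add: sum_subtractf)
    also have "\<dots> = (\<Sum>j\<in>{1..k}. \<Sum>i\<in>I j. e j i) + S" unfolding S_def by (simp add: sum.distrib)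
    finally show ?thesis using S0 by simp
  qed
  define GA :: "(nat \<Rightarrow> 'a) \<Rightarrow> nat \<Rightarrow> nat \<Rightarrow> 'a" where "GA \<Theta>' j i = (\<gamma> i * \<alpha> j / p 0) *\<^sub>R (\<Theta>' i - glbar k I \<alpha> \<gamma> \<Theta>')
        + (\<gamma> i * \<tau> j * (1 - \<alpha> j) / p 0) *\<^sub>R (\<Theta>' i - clbar \<gamma> (I j) \<Theta>')" for \<Theta>' j i
  define GB :: "(nat \<Rightarrow> 'a) \<Rightarrow> nat \<Rightarrow> nat \<Rightarrow> 'a" where "GB \<Theta>' j i = (\<gamma> i * (1 - \<tau> j) * (1 - \<alpha> j) / ((1 - p 0) * p j)) *\<^sub>R (\<Theta>' i - clbar \<gamma> (I j) \<Theta>')" for \<Theta>' j i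
  define GC :: "(nat \<Rightarrow> 'a) \<Rightarrow> nat \<Rightarrow> nat \<Rightarrow> 'a" where "GC \<Theta>' j i = (1 / ((1 - p 0) * (1 - p j))) *\<^sub>R g i (\<Theta>' i)" for \<Theta>' j i
  have Gorc_eq: "Gorc k I \<alpha> \<gamma> \<tau> p g \<xi> \<Theta>' j i = (if \<xi> 0 then GA \<Theta>' j i else if \<xi> j then GB \<Theta>' j i else GC \<Theta>' j i)"
    for \<xi> \<Theta>' j i unfolding Gorc_def GA_def GB_def GC_def ..
  define A where "A j i = (norm (GA \<Theta> j i - GA \<Theta>hat j i))\<^sup>2" for j i
  define B where "B j i = (norm (GB \<Theta> j i - GB \<Theta>hat j i))\<^sup>2" for j i
  define Cc where "Cc j i = (norm (GC \<Theta> j i - GC \<Theta>hat j i))\<^sup>2" for j i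
  have Eterm: "measure_pmf.expectation (xi_pmf k p)
           (\<lambda>\<xi>. (norm (Gorc k I \<alpha> \<gamma> \<tau> p g \<xi> \<Theta> j i - Gorc k I \<alpha> \<gamma> \<tau> p g \<xi> \<Theta>hat j i))\<^sup>2)
      = p 0 * A j i + (1 - p 0) * (p j * B j i + (1 - p j) * Cc j i)" if j: "j \<in> {1..k}" for j i
  proof -
    have "(\<lambda>\<xi>. (norm (Gorc k I \<alpha> \<gamma> \<tau> p g \<xi> \<Theta> j i - Gorc k I \<alpha> \<gamma> \<tau> p g \<xi> \<Theta>hat j i))\<^sup>2)
        = (\<lambda>\<xi>. (\<lambda>a b. if a then A j i else if b then B j i else Cc j i) (\<xi> 0) (\<xi> j))"
      unfolding Gorc_eq A_def B_def Cc_def by (rule ext) simp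
    moreover have "measure_pmf.expectation (xi_pmf k p) (\<lambda>\<xi>. (\<lambda>a b. if a then A j i else if b then B j i else Cc j i) (\<xi> 0) (\<xi> j))
      = p 0 * (p j * A j i + (1 - p j) * A j i) + (1 - p 0) * (p j * B j i + (1 - p j) * Cc j i)"
    proof -
      have "0 < p j" "p j < 1" using pj j by auto
      then show ?thesis using xi_exp[of j k p "\<lambda>a b. if a then A j i else if b then B j i else Cc j i"] p0 j by simp
    qed
    ultimately show ?thesis by (simp add: algebra_simps)
  qed
  have Esum: "measure_pmf.expectation (xi_pmf k p)
           (\<lambda>\<xi>. \<Sum>j\<in>{1..k}. \<Sum>i\<in>I j.
              (norm (Gorc k I \<alpha> \<gamma> \<tau> p g \<xi> \<Theta> j i - Gorc k I \<alpha> \<gamma> \<tau> p g \<xi> \<Theta>hat j i))\<^sup>2)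
      = (\<Sum>j\<in>{1..k}. \<Sum>i\<in>I j. p 0 * A j i + (1 - p 0) * (p j * B j i + (1 - p j) * Cc j i))"
  proof -
    have int: "integrable (measure_pmf (xi_pmf k p)) h" for h :: "_ \<Rightarrow> real"
      by (rule integrable_measure_pmf_finite[OF xi_finite])
    show ?thesis
      by (subst Bochner_Integration.integral_sum[OF int], subst Bochner_Integration.integral_sum[OF int])
         (intro sum.cong refl Eterm, auto)
  qed
  have gdiff: "glbar k I \<alpha> \<gamma> \<Delta> = glbar k I \<alpha> \<gamma> \<Theta> - glbar k I \<alpha> \<gamma> \<Theta>hat"
    unfolding \<Delta>_def by (rule glbar_diff)
  have cdiff: "clbar \<gamma> (I j) \<Delta> = clbar \<gamma> (I j) \<Theta> - clbar \<gamma> (I j) \<Theta>hat" for j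
    unfolding \<Delta>_def by (rule clbar_diff)
  have cL1: "2 / p 0 * (\<alpha> j * \<gamma> i) \<le> calL k I \<alpha> \<gamma> p L" if "j \<in> {1..k}" "i \<in> I j" for j i
  proof -
    have "\<alpha> j * \<gamma> i \<le> Max ((\<lambda>i. \<alpha> j * \<gamma> i) ` I j)" using fin that by (intro Max_ge) auto
    also have "\<dots> \<le> Max ((\<lambda>j. Max ((\<lambda>i. \<alpha> j * \<gamma> i) ` I j)) ` {1..k})" using that by (intro Max_ge) auto
    finally have "2 / p 0 * (\<alpha> j * \<gamma> i) \<le> 2 / p 0 * Max ((\<lambda>j. Max ((\<lambda>i. \<alpha> j * \<gamma> i) ` I j)) ` {1..k})"
      using p0 by (intro mult_left_mono) auto
    then show ?thesis unfolding calL_def by linarith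
  qed
  have cL2: "2 * (1 - \<alpha> j) * \<gamma> i / (p 0 + 2 * (1 - p 0) * p j) \<le> calL k I \<alpha> \<gamma> p L" if "j \<in> {1..k}" "i \<in> I j" for j i
  proof -
    have "0 < p j" using pj that by auto
    then have D: "0 < p 0 + 2 * (1 - p 0) * p j" using p0 by (intro add_pos_nonneg) auto
    have "\<gamma> i \<le> Max (\<gamma> ` I j)" using fin that by (intro Max_ge) auto
    then have "2 * (1 - \<alpha> j) * \<gamma> i / (p 0 + 2 * (1 - p 0) * p j) \<le> 2 * (1 - \<alpha> j) * Max (\<gamma> ` I j) / (p 0 + 2 * (1 - p 0) * p j)"
      using alpha_range that D by (intro divide_right_mono mult_left_mono) auto
    also have "\<dots> \<le> Max ((\<lambda>j. 2 * (1 - \<alpha> j) * Max (\<gamma> ` I j) / (p 0 + 2 * (1 - p 0) * p j)) ` {1..k})"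
      using that by (intro Max_ge) auto
    finally show ?thesis unfolding calL_def by linarith
  qed
  have cL3: "L / (1 - p 0) * (1 / (1 - p j)) \<le> calL k I \<alpha> \<gamma> p L" if "j \<in> {1..k}" for j
  proof -
    have "1 / (1 - p j) \<le> Max ((\<lambda>j. 1 / (1 - p j)) ` {1..k})" using that by (intro Max_ge) auto
    then have "L / (1 - p 0) * (1 / (1 - p j)) \<le> L / (1 - p 0) * Max ((\<lambda>j. 1 / (1 - p j)) ` {1..k})"
      using Lp p0 by (intro mult_left_mono) auto
    then show ?thesis unfolding calL_def by linarith
  qed
  have ns: "(norm (c *\<^sub>R x))\<^sup>2 = c\<^sup>2 * (norm x)\<^sup>2" for c :: real and x :: 'a
    by (simp add: power_mult_distrib)
  have bound: "p 0 * A j i + (1 - p 0) * (p j * B j i + (1 - p j) * Cc j i) \<le> 2 * calL k I \<alpha> \<gamma> p L * e j i"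
    if ji: "j \<in> {1..k}" "i \<in> I j" for j i
  proof (rule scalar_bound[where X="(norm (v' i))\<^sup>2" and Y="(norm (v j i))\<^sup>2" and Z="(norm (g i (\<Theta> i) - g i (\<Theta>hat i)))\<^sup>2"
        and \<tau>="\<tau> j" and L=L])
    show "0 < p 0" "p 0 < 1" using p0 by auto
    show "0 < p j" "p j < 1" using pj ji by auto
    show "0 \<le> \<alpha> j" "\<alpha> j \<le> 1" using alpha_range ji by auto
    show "0 < \<gamma> i" using gamma_pos iin[OF ji] by auto
    show "0 < L" by (rule Lp)
    show "\<tau> j = p 0 / (p 0 + 2 * (1 - p 0) * p j)" using tau ji by auto
    show "0 \<le> (norm (v' i))\<^sup>2" "0 \<le> (norm (v j i))\<^sup>2" "0 \<le> (norm (g i (\<Theta> i) - g i (\<Theta>hat i)))\<^sup>2" by auto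
    show "2 / p 0 * (\<alpha> j * \<gamma> i) \<le> calL k I \<alpha> \<gamma> p L" by (rule cL1[OF ji])
    show "2 * (1 - \<alpha> j) * \<gamma> i / (p 0 + 2 * (1 - p 0) * p j) \<le> calL k I \<alpha> \<gamma> p L" by (rule cL2[OF ji])
    show "L / (1 - p 0) * (1 / (1 - p j)) \<le> calL k I \<alpha> \<gamma> p L" by (rule cL3[OF ji(1)])
    have "GA \<Theta> j i - GA \<Theta>hat j i = (\<gamma> i * \<alpha> j / p 0) *\<^sub>R ((\<Theta> i - glbar k I \<alpha> \<gamma> \<Theta>) - (\<Theta>hat i - glbar k I \<alpha> \<gamma> \<Theta>hat))
        + (\<gamma> i * \<tau> j * (1 - \<alpha> j) / p 0) *\<^sub>R ((\<Theta> i - clbar \<gamma> (I j) \<Theta>) - (\<Theta>hat i - clbar \<gamma> (I j) \<Theta>hat))"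
      unfolding GA_def by (simp add: algebra_simps)
    also have "\<dots> = (\<gamma> i * \<alpha> j / p 0) *\<^sub>R v' i + (\<gamma> i * \<tau> j * (1 - \<alpha> j) / p 0) *\<^sub>R v j i"
      unfolding v'_def v_def gdiff cdiff by (simp add: \<Delta>_def algebra_simps)
    finally show "A j i \<le> 2 * (\<gamma> i * \<alpha> j / p 0)\<^sup>2 * (norm (v' i))\<^sup>2 + 2 * (\<gamma> i * \<tau> j * (1 - \<alpha> j) / p 0)\<^sup>2 * (norm (v j i))\<^sup>2"
      unfolding A_def by (simp only: norm2_comb)
    have "GB \<Theta> j i - GB \<Theta>hat j i = (\<gamma> i * (1 - \<tau> j) * (1 - \<alpha> j) / ((1 - p 0) * p j)) *\<^sub>R v j i"
      unfolding GB_def v_def cdiff by (simp add: \<Delta>_def algebra_simps)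
    then show "B j i = (\<gamma> i * (1 - \<tau> j) * (1 - \<alpha> j) / ((1 - p 0) * p j))\<^sup>2 * (norm (v j i))\<^sup>2"
      unfolding B_def by (simp only: ns)
    have "GC \<Theta> j i - GC \<Theta>hat j i = (1 / ((1 - p 0) * (1 - p j))) *\<^sub>R (g i (\<Theta> i) - g i (\<Theta>hat i))"
      unfolding GC_def by (simp add: algebra_simps)
    then show "Cc j i = (1 / ((1 - p 0) * (1 - p j)))\<^sup>2 * (norm (g i (\<Theta> i) - g i (\<Theta>hat i)))\<^sup>2"
      unfolding Cc_def by (simp only: ns)
    have d: "\<And>x. (f i has_derivative (\<lambda>h. g i x \<bullet> h)) (at x)" using grad iin[OF ji] by blast
    have "f i (\<Theta>hat i) + g i (\<Theta>hat i) \<bullet> (\<Theta> i - \<Theta>hat i) + 1 / (2 * L) * (norm (g i (\<Theta> i) - g i (\<Theta>hat i)))\<^sup>2 \<le> f i (\<Theta> i)"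
      using sconv smooth iin[OF ji] mu_pos Lp by (intro cocoercive[OF d]) auto
    then show "(norm (g i (\<Theta> i) - g i (\<Theta>hat i)))\<^sup>2 / (2 * L) + (1 - \<alpha> j) * \<gamma> i / 2 * (norm (v j i))\<^sup>2
        + \<alpha> j * \<gamma> i / 2 * (norm (v' i))\<^sup>2 \<le> e j i"
      unfolding e_def w1_def w2_def \<Delta>_def by simp
  qed
  have "measure_pmf.expectation (xi_pmf k p)
           (\<lambda>\<xi>. \<Sum>j\<in>{1..k}. \<Sum>i\<in>I j.
              (norm (Gorc k I \<alpha> \<gamma> \<tau> p g \<xi> \<Theta> j i - Gorc k I \<alpha> \<gamma> \<tau> p g \<xi> \<Theta>hat j i))\<^sup>2)
      \<le> (\<Sum>j\<in>{1..k}. \<Sum>i\<in>I j. 2 * calL k I \<alpha> \<gamma> p L * e j i)"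
    unfolding Esum by (intro sum_mono bound) auto
  also have "\<dots> = 2 * calL k I \<alpha> \<gamma> p L * (Fobj k I \<alpha> \<gamma> f \<Theta> - Fobj k I \<alpha> \<gamma> f \<Theta>hat)"
    unfolding Fdiff by (simp add: sum_distrib_left)
  finally show ?thesis .
qed

end
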